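(* Let $p(z)$ be analytic in $\mathbb{D}$ with $p(0)=1$ and let $Q\in\mathcal{H}[1,n]$ satisfy $|Q(z)|<M$ in $\mathbb{D}$ for some $M>0$. Let $-1\leq B<A<1$ and $-1<E<D\leq 1$, and let $\alpha,\beta$ be numbers with $\alpha+\beta>0$ such that $$(A-B)(1-A)(1+E)>(1+|A|)\big(\beta+\alpha+|\beta A+\alpha B|\big)\big((1+D)(1-B)+M(1+E)(1-A)\big).$$ If $$p(z)Q(z)+\frac{zp'(z)}{\beta p(z)+\alpha}\prec\frac{1+Dz}{1+Ez},$$ then $p(z)\prec \dfrac{1+Az}{1+Bz}$.
   Context: $\mathbb{D}$ is the open unit disk. $\mathcal{H}[1,n]$ is the class of functions analytic in $\mathbb{D}$ of the form $1+a_nz^n+a_{n+1}z^{n+1}+\cdots$. $f\prec F$ means $f=F\circ\omega$ for some analytic $\omega:\mathbb{D}\to\mathbb{D}$ with $\omega(0)=0$. *)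

theory Defs
  imports "HOL-Complex_Analysis.Complex_Analysis"
begin

definition subordinate :: "(complex \<Rightarrow> complex) \<Rightarrow> (complex \<Rightarrow> complex) \<Rightarrow> bool" where
  "subordinate f F \<longleftrightarrow>
     (\<exists>w. w holomorphic_on ball 0 1 \<and> w ` ball 0 1 \<subseteq> ball 0 1 \<and> w 0 = 0 \<and>
          (\<forall>z\<in>ball 0 1. f z = F (w z)))"

text \<open>The class H[1,n]: analytic in the disk, of the form 1 + a_n z^n + a_(n+1) z^(n+1) + ...\<close>
definition H1n :: "nat \<Rightarrow> (complex \<Rightarrow> complex) \<Rightarrow> bool" where
  "H1n n Q \<longleftrightarrow> Q holomorphic_on ball 0 1 \<and> Q 0 = 1 \<and>
     (\<forall>k. 1 \<le> k \<and> k < n \<longrightarrow> (deriv ^^ k) Q 0 = 0)"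

end

theory Submission
  imports Defs
begin

lemma normsq: "(cmod (1 + complex_of_real D * z)) ^ 2 = 1 + 2*D*Re z + D ^ 2 * (cmod z) ^ 2"
proof -
  have "(cmod (1 + complex_of_real D * z)) ^ 2 = (1 + D*Re z) ^ 2 + (D*Im z) ^ 2" by (simp add: cmod_power2)
  also have "\<dots> = 1 + 2*D*Re z + D ^ 2 * (Re z ^2 + Im z ^ 2)" by (simp add: power2_eq_square algebra_simps)
  also have "Re z ^2 + Im z ^ 2 = (cmod z) ^ 2" by (simp add: cmod_power2)
  finally show ?thesis .
qed

lemma boundF:
  fixes D E :: real and z :: complex
  assumes "norm z < 1" "-1 < E" "E < D" "D \<le> 1"
  shows "norm ((1 + of_real D * z) / (1 + of_real E * z)) \<le> (1 + D) / (1 + E)"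
proof -
  define s where "s = cmod z"
  define x where "x = Re z"
  have s: "0 \<le> s" "s < 1" "x \<le> s" using assms(1) complex_Re_le_cmod by (auto simp: s_def x_def)
  have nz: "1 + of_real E * z \<noteq> 0"
  proof
    assume "1 + of_real E * z = 0"
    then have "cmod (of_real E * z) = 1" by (metis add.commute add_eq_0_iff norm_minus_cancel norm_one)
    moreover have "cmod (of_real E * z) < 1" using assms
    proof -
      have "\<bar>E\<bar> \<le> 1" using assms by auto
      then have "\<bar>E\<bar> * cmod z \<le> 1 * cmod z" by (intro mult_right_mono) auto
      then show ?thesis using assms by (simp add: norm_mult)
    qed
    ultimately show False by simp
  qed
  have key: "(1+E) ^ 2 * (1 + 2*D*x + D ^ 2* s ^ 2) \<le> (1+D) ^ 2 * (1 + 2*E*x + E ^ 2* s ^ 2)"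
  proof -
    have eq: "(1+D) ^ 2 * (1 + 2*E*x + E ^ 2* s ^ 2) - (1+E) ^ 2 * (1 + 2*D*x + D ^ 2* s ^ 2)
       = (D-E) * ((1-s)*((2+D+E) + (D+E+2*D*E)* s) + 2*(1-D*E)*(s-x))"
      by (simp add: algebra_simps power2_eq_square)
    have g1: "(2+D+E) + (D+E+2*D*E)* s \<ge> 0"
    proof -
      have "(2+D+E) + (D+E+2*D*E)* s = (1-s)*(2+D+E) + s*(2*(1+D)*(1+E))" by (simp add: algebra_simps)
      moreover have "(1-s)*(2+D+E) \<ge> 0" using s assms by simp
      moreover have "s*(2*(1+D)*(1+E)) \<ge> 0" using s assms by simp
      ultimately show ?thesis by linarith
    qed
    have g2: "1 - D*E > 0"
    proof -
      have "\<bar>E\<bar> < 1" "\<bar>D\<bar> \<le> 1" using assms by auto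
      then have "\<bar>D\<bar> * \<bar>E\<bar> \<le> 1 * \<bar>E\<bar>" by (intro mult_right_mono) auto
      then have "\<bar>D*E\<bar> < 1" using \<open>\<bar>E\<bar> < 1\<close> by (simp add: abs_mult)
      then show ?thesis by linarith
    qed
    have h1: "(1-s)*((2+D+E) + (D+E+2*D*E)* s) \<ge> 0"
    proof -
      have "0 \<le> 1 - s" using s(2) by simp
      then show ?thesis using g1 by (rule mult_nonneg_nonneg)
    qed
    have h3: "2*(1-D*E) \<ge> 0" using g2 by simp
    have h2: "2*(1-D*E)*(s-x) \<ge> 0"
    proof -
      have "0 \<le> s - x" using s(3) by simp
      with h3 show ?thesis by (rule mult_nonneg_nonneg)
    qed
    have h4: "D - E \<ge> 0" using assms by linarith
    have "(D-E) * ((1-s)*((2+D+E) + (D+E+2*D*E)* s) + 2*(1-D*E)*(s-x)) \<ge> 0"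
      using h4 add_nonneg_nonneg[OF h1 h2] by (rule mult_nonneg_nonneg)
    then have "(1+D) ^ 2 * (1 + 2*E*x + E ^ 2* s ^ 2) - (1+E) ^ 2 * (1 + 2*D*x + D ^ 2* s ^ 2) \<ge> 0"
      unfolding eq .
    then show ?thesis by (simp only: diff_ge_0_iff_ge)
  qed
  have k2: "(1+E) ^ 2 * (cmod (1 + complex_of_real D * z)) ^ 2 \<le> (1+D) ^ 2 * (cmod (1 + complex_of_real E * z)) ^ 2"
    unfolding normsq using key unfolding s_def x_def .
  have "(cmod (1 + complex_of_real D * z) * (1+E)) ^ 2 \<le> (cmod (1 + complex_of_real E * z) * (1+D)) ^ 2"
    using k2 unfolding power_mult_distrib by (simp only: mult.commute)
  then have "cmod (1 + complex_of_real D * z) * (1+E) \<le> cmod (1 + complex_of_real E * z) * (1+D)"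
  proof (rule power2_le_imp_le)
    show "0 \<le> cmod (1 + complex_of_real E * z) * (1+D)"
      using assms by (intro mult_nonneg_nonneg) simp_all
  qed
  then have ineq: "na * (1+E) \<le> nb * (1+D)" if "na = cmod (1 + complex_of_real D * z)" "nb = cmod (1 + complex_of_real E * z)" for na nb
    using that by simp
  define na where "na = cmod (1 + complex_of_real D * z)"
  define nb where "nb = cmod (1 + complex_of_real E * z)"
  have nbp: "nb > 0" using nz by (simp add: nb_def)
  have Ep: "1 + E > 0" using assms by simp
  have i2: "na * (1+E) \<le> nb * (1+D)" using ineq na_def nb_def by blast
  have "na / nb = (na * (1+E)) / (nb * (1+E))" using Ep by simp
  also have "\<dots> \<le> (nb * (1+D)) / (nb * (1+E))"
    using i2 nbp Ep by (intro divide_right_mono) simp_all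
  also have "\<dots> = (1+D) / (1+E)" using nbp by simp
  finally have "na / nb \<le> (1+D) / (1+E)" .
  then show ?thesis by (simp add: norm_divide na_def nb_def)
qed

lemma normt1: assumes "t < 1" shows "cmod (complex_of_real t - 1) = 1 - t"
proof -
  have "cmod (complex_of_real t - 1) = cmod (complex_of_real (t-1))" by simp
  also have "\<dots> = \<bar>t - 1\<bar>" by (rule norm_of_real)
  finally show ?thesis using assms by simp
qed

lemma jack:
  fixes w :: "complex \<Rightarrow> complex" and r :: real
  assumes r: "0 < r" and hol: "w holomorphic_on ball 0 r" and w0: "w 0 = 0"
    and lt: "\<forall>z\<in>ball 0 r. norm (w z) < 1" and z0: "norm z0 = r" and wz0: "norm (w z0) = 1"
    and der: "(w has_field_derivative w') (at z0)"
  shows "norm (z0 * w') \<ge> 1"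
proof -
  define v where "v = (\<lambda>\<xi>. w (of_real r * \<xi>))"
  have "(w \<circ> (\<lambda>\<xi>. of_real r * \<xi>)) holomorphic_on ball 0 1"
  proof (rule holomorphic_on_compose_gen[where t="ball 0 r"])
    show "(\<lambda>\<xi>. of_real r * \<xi>) holomorphic_on ball 0 1" by (intro holomorphic_intros)
    show "w holomorphic_on ball 0 r" by (rule hol)
    show "(\<lambda>\<xi>. complex_of_real r * \<xi>) ` ball 0 1 \<subseteq> ball 0 r"
      using r by (auto simp: norm_mult)
  qed
  then have vhol: "v holomorphic_on ball 0 1" by (simp add: v_def o_def)
  have v0: "v 0 = 0" using w0 by (simp add: v_def)
  have vlt: "norm (v \<xi>) < 1" if "norm \<xi> < 1" for \<xi>
    using lt that r by (auto simp: v_def norm_mult)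
  have bnd: "norm (w (of_real t * z0)) \<le> t" if "0 < t" "t < 1" for t
  proof -
    have "norm (of_real t * z0 / of_real r) = t" using that z0 r by (simp add: norm_mult norm_divide)
    then have "norm (v (of_real t * z0 / of_real r)) \<le> t"
      using Schwarz_Lemma(1)[OF vhol v0 vlt, of "of_real t * z0 / of_real r"] that by simp
    then show ?thesis using r by (simp add: v_def)
  qed
  define S where "S = {y. \<exists>t. 0 < t \<and> t < 1 \<and> y = of_real t * z0}"
  have lim: "((\<lambda>y. (w y - w z0) / (y - z0)) \<longlongrightarrow> w') (at z0 within S)"
    using has_field_derivative_at_within[OF der] has_field_derivative_iff by blast
  then have limn: "((\<lambda>y. norm ((w y - w z0) / (y - z0))) \<longlongrightarrow> norm w') (at z0 within S)"
    by (rule tendsto_norm)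
  have ev: "eventually (\<lambda>y. 1 / r \<le> norm ((w y - w z0) / (y - z0))) (at z0 within S)"
    unfolding eventually_at_filter
  proof (rule always_eventually, intro allI impI)
    fix y assume "y \<noteq> z0" "y \<in> S"
    then obtain t where t: "0 < t" "t < 1" "y = of_real t * z0" by (auto simp: S_def)
    have n1: "norm (w y - w z0) \<ge> 1 - t"
    proof -
      have "norm (w z0) = norm ((w z0 - w y) + w y)" by simp
      also have "\<dots> \<le> norm (w z0 - w y) + norm (w y)" by (rule norm_triangle_ineq)
      also have "norm (w z0 - w y) = norm (w y - w z0)" by (rule norm_minus_commute)
      finally have "norm (w z0) \<le> norm (w y - w z0) + norm (w y)" .
      then show ?thesis using bnd[OF t(1,2)] t(3) wz0 by simp
    qed
    have n2: "norm (y - z0) = (1 - t) * r"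
    proof -
      have "y - z0 = of_real (t - 1) * z0" using t by (simp add: algebra_simps)
      then show ?thesis using z0 t normt1[of t] by (simp add: norm_mult)
    qed
    have "1 / r = (1 - t) / ((1 - t) * r)" using t r by simp
    also have "\<dots> \<le> norm (w y - w z0) / ((1 - t) * r)"
      using n1 t r by (intro divide_right_mono) auto
    finally show "1 / r \<le> norm ((w y - w z0) / (y - z0))" by (simp add: norm_divide n2)
  qed
  have "z0 islimpt S"
    unfolding islimpt_approachable
  proof (intro allI impI)
    fix e :: real assume e: "0 < e"
    define t where "t = max (1/2) (1 - e / (2*r))"
    have t: "0 < t" "t < 1" "(1 - t) * r < e"
    proof -
      show "0 < t" by (simp add: t_def)
      show "t < 1" using e r by (simp add: t_def)
      have "1 - t \<le> e / (2*r)" by (simp add: t_def)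
      then have "(1 - t) * r \<le> e / (2*r) * r" using r by (intro mult_right_mono) auto
      also have "\<dots> = e/2" using r by simp
      finally show "(1 - t) * r < e" using e by simp
    qed
    have "of_real t * z0 \<in> S" using t by (auto simp: S_def)
    moreover have "of_real t * z0 \<noteq> z0" using t r z0 by auto
    moreover have "dist (of_real t * z0) z0 = (1 - t) * r"
    proof -
      have "of_real t * z0 - z0 = of_real (t - 1) * z0" by (simp add: algebra_simps)
      then show ?thesis using z0 t normt1[of t] by (simp add: dist_norm norm_mult)
    qed
    ultimately show "\<exists>x'\<in>S. x' \<noteq> z0 \<and> dist x' z0 < e" using t by metis
  qed
  then have "at z0 within S \<noteq> bot" using trivial_limit_within by blast
  then have "1 / r \<le> norm w'" using tendsto_lowerbound[OF limn ev] by blast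
  then have "r * (1 / r) \<le> r * norm w'" using r by (intro mult_left_mono) auto
  then show ?thesis using r z0 by (simp add: norm_mult)
qed

lemma nb: "norm w0 = 1 \<Longrightarrow> norm (complex_of_real a + complex_of_real b * w0) \<le> \<bar>a\<bar> + \<bar>b\<bar>"
  using norm_triangle_ineq[of "of_real a" "of_real b * w0"] by (simp add: norm_mult)

lemma mainbound:
  fixes A B D E M \<alpha> \<beta> :: real and p0 c w0 d z0 q0 :: complex
  assumes AB: "-1 \<le> B" "B < A" "A < 1"
    and ED: "-1 < E" "E < D" "D \<le> 1"
    and ab: "\<alpha> + \<beta> > 0" and M: "M > 0"
    and ineq: "(A - B) * (1 - A) * (1 + E) >
        (1 + \<bar>A\<bar>) * (\<beta> + \<alpha> + \<bar>\<beta> * A + \<alpha> * B\<bar>) *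
        ((1 + D) * (1 - B) + M * (1 + E) * (1 - A))"
    and c: "c = of_real A - of_real B * p0" "c \<noteq> 0"
    and w0: "w0 = (p0 - 1) / c" "norm w0 = 1"
    and dd: "norm (z0 * (d * of_real (A - B) / c^2)) \<ge> 1"
    and q0: "norm q0 < M"
    and den: "of_real \<beta> * p0 + of_real \<alpha> \<noteq> 0"
  shows "norm (p0 * q0 + z0 * d / (of_real \<beta> * p0 + of_real \<alpha>)) > (1 + D) / (1 + E)"
proof -
  define u where "u = 1 + of_real B * w0"
  define S where "S = \<alpha> + \<beta> + \<bar>\<beta> * A + \<alpha> * B\<bar>"
  define X where "X = A - B"
  have X: "X > 0" using AB by (simp add: X_def)
  have S: "S > 0" using ab by (simp add: S_def)
  have cu: "c * u = of_real (A - B)"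
    using c by (simp add: u_def w0 field_simps)
  then have u0: "u \<noteq> 0" using AB by auto
  have "norm c * norm u = X" using AB by (simp add: X_def norm_mult[symmetric] cu del: of_real_diff)
  then have nc: "norm c = X / norm u" using u0 by (simp add: field_simps)
  have pu: "p0 * u = 1 + of_real A * w0"
    using c by (simp add: u_def w0 field_simps)
  have c': "of_real A - of_real B * p0 \<noteq> 0" using c by simp
  have denu: "(of_real \<beta> * p0 + of_real \<alpha>) * u = of_real (\<alpha> + \<beta>) + of_real (\<beta> * A + \<alpha> * B) * w0"
    using c' unfolding u_def w0(1) c(1) by (simp add: field_simps)
  have nu: "norm u > 0" "norm u \<le> 1 + \<bar>B\<bar>"
    using u0 norm_triangle_ineq[of 1 "of_real B * w0"] w0(2) by (auto simp: u_def norm_mult)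
  have np: "norm p0 \<le> (1 + \<bar>A\<bar>) / norm u"
  proof -
    have "norm p0 * norm u \<le> 1 + \<bar>A\<bar>"
      using pu norm_triangle_ineq[of 1 "of_real A * w0"] w0(2) by (metis norm_mult norm_of_real norm_one mult.right_neutral)
    then show ?thesis using nu by (simp add: field_simps)
  qed
  have nden: "norm (of_real \<beta> * p0 + of_real \<alpha>) \<le> S / norm u"
  proof -
    have "norm (of_real (\<alpha> + \<beta>) + of_real (\<beta> * A + \<alpha> * B) * w0) \<le> S"
      using nb[of w0 "\<alpha> + \<beta>" "\<beta> * A + \<alpha> * B"] w0(2) ab
      by (simp add: S_def del: of_real_add of_real_mult)
    then have "norm (of_real \<beta> * p0 + of_real \<alpha>) * norm u \<le> S" using denu by (metis norm_mult)
    then show ?thesis using nu by (simp add: field_simps)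
  qed
  have nden0: "norm (of_real \<beta> * p0 + of_real \<alpha>) > 0" using den by simp
  have nd: "norm (z0 * d) \<ge> X / (norm u)^2"
  proof -
    have "norm (z0 * d) * X / (norm c)^2 \<ge> 1" using dd AB by (simp add: norm_mult norm_divide norm_power X_def mult.assoc del: of_real_diff)
    then have "norm (z0 * d) * X \<ge> (norm c)^2" using c(2) by (simp add: field_simps)
    then have "norm (z0 * d) * X \<ge> X^2 / (norm u)^2" by (simp add: nc power_divide)
    then have "X * (X / (norm u)^2) \<le> X * norm (z0 * d)" by (simp add: power2_eq_square mult.commute)
    then show ?thesis using X mult_le_cancel_left_pos by blast
  qed
  have t1: "norm (z0 * d / (of_real \<beta> * p0 + of_real \<alpha>)) \<ge> X / (S * norm u)"
  proof -
    have "X / (S * norm u) = (X / (norm u)^2) / (S / norm u)" using nu S by (simp add: field_simps power2_eq_square)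
    also have "\<dots> \<le> norm (z0 * d) / norm (of_real \<beta> * p0 + of_real \<alpha>)"
      using nd nden nden0 X S nu by (intro frac_le) auto
    finally show ?thesis by (simp add: norm_divide)
  qed
  have t2: "norm (p0 * q0) \<le> (1 + \<bar>A\<bar>) * M / norm u"
  proof -
    have "norm p0 * norm q0 \<le> (1 + \<bar>A\<bar>) / norm u * M"
      using np q0 by (intro mult_mono) auto
    then show ?thesis by (simp add: norm_mult)
  qed
  have tri: "norm (p0 * q0 + z0 * d / (of_real \<beta> * p0 + of_real \<alpha>)) \<ge>
      norm (z0 * d / (of_real \<beta> * p0 + of_real \<alpha>)) - norm (p0 * q0)"
    by (metis add.commute norm_diff_ineq)
  have key: "X / S - (1 + \<bar>A\<bar>) * M > (1 + \<bar>A\<bar>) * (1 + D) * (1 - B) / ((1 + E) * (1 - A))"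
  proof -
    have pos: "(1 + E) * (1 - A) > 0" using AB ED by simp
    have "X * (1 - A) * (1 + E) > (1 + \<bar>A\<bar>) * S * ((1 + D) * (1 - B) + M * (1 + E) * (1 - A))"
      using ineq by (simp add: X_def S_def add.commute)
    then have "X * ((1 + E) * (1 - A)) / S > (1 + \<bar>A\<bar>) * ((1 + D) * (1 - B) + M * (1 + E) * (1 - A))"
      using S by (simp add: field_simps)
    then have "X / S > (1 + \<bar>A\<bar>) * ((1 + D) * (1 - B) + M * (1 + E) * (1 - A)) / ((1 + E) * (1 - A))"
      using pos by (simp add: field_simps)
    also have "(1 + \<bar>A\<bar>) * ((1 + D) * (1 - B) + M * (1 + E) * (1 - A)) / ((1 + E) * (1 - A))
       = (1 + \<bar>A\<bar>) * (1 + D) * (1 - B) / ((1 + E) * (1 - A)) + (1 + \<bar>A\<bar>) * M"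
      using pos by (simp add: field_simps)
    finally show ?thesis by simp
  qed
  have T: "(1 + \<bar>A\<bar>) * (1 - B) \<ge> norm u * (1 - A)"
  proof (cases "B \<ge> 0")
    case True
    then have "(1 + \<bar>A\<bar>) * (1 - B) \<ge> (1 + B) * (1 - A)" using AB by (simp add: algebra_simps)
    moreover have "(1 + B) * (1 - A) \<ge> norm u * (1 - A)" using nu True AB by (intro mult_right_mono) auto
    ultimately show ?thesis by linarith
  next
    case False
    then have "(1 + \<bar>A\<bar>) * (1 - B) \<ge> (1 - A) * (1 - B)" using AB by (intro mult_right_mono) auto
    moreover have "(1 - A) * (1 - B) \<ge> (1 - A) * norm u" using nu False AB by (intro mult_left_mono) auto
    ultimately show ?thesis by (simp add: mult.commute)
  qed
  have "(1 + \<bar>A\<bar>) * (1 + D) * (1 - B) / ((1 + E) * (1 - A)) \<ge> norm u * (1 + D) / (1 + E)"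
  proof -
    have "norm u * (1 - A) * (1 + D) \<le> (1 + \<bar>A\<bar>) * (1 - B) * (1 + D)"
      using T ED by (intro mult_right_mono) auto
    then have "norm u * (1 - A) * (1 + D) / ((1 + E) * (1 - A)) \<le> (1 + \<bar>A\<bar>) * (1 - B) * (1 + D) / ((1 + E) * (1 - A))"
      using AB ED by (intro divide_right_mono) auto
    moreover have "norm u * (1 - A) * (1 + D) / ((1 + E) * (1 - A)) = norm u * (1 + D) / (1 + E)"
      using AB by simp
    moreover have "(1 + \<bar>A\<bar>) * (1 - B) * (1 + D) = (1 + \<bar>A\<bar>) * (1 + D) * (1 - B)" by simp
    ultimately show ?thesis by simp
  qed
  with key have k2: "X / S - (1 + \<bar>A\<bar>) * M > norm u * (1 + D) / (1 + E)" by linarith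
  have "(1 + D) / (1 + E) = (norm u * (1 + D) / (1 + E)) / norm u" using nu by simp
  also have "\<dots> < (X / S - (1 + \<bar>A\<bar>) * M) / norm u" using k2 nu by (intro divide_strict_right_mono) auto
  also have "\<dots> = X / (S * norm u) - (1 + \<bar>A\<bar>) * M / norm u" using nu S by (simp add: field_simps)
  also have "\<dots> \<le> norm (p0 * q0 + z0 * d / (of_real \<beta> * p0 + of_real \<alpha>))" using t1 t2 tri by linarith
  finally show ?thesis .
qed

theorem mainTheorem2:
  fixes p Q :: "complex \<Rightarrow> complex"
    and n :: nat and M A B D E \<alpha> \<beta> :: real
  assumes n: "n \<ge> 1"
    and p_hol: "p holomorphic_on ball 0 1" and p0: "p 0 = 1"
    and Q: "H1n n Q" and QM: "\<forall>z\<in>ball 0 1. norm (Q z) < M" and M: "M > 0"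
    and AB: "-1 \<le> B" "B < A" "A < 1"
    and ED: "-1 < E" "E < D" "D \<le> 1"
    and ab: "\<alpha> + \<beta> > 0"
    and ineq: "(A - B) * (1 - A) * (1 + E) >
        (1 + \<bar>A\<bar>) * (\<beta> + \<alpha> + \<bar>\<beta> * A + \<alpha> * B\<bar>) *
        ((1 + D) * (1 - B) + M * (1 + E) * (1 - A))"
    and denom: "\<forall>z\<in>ball 0 1. of_real \<beta> * p z + of_real \<alpha> \<noteq> 0"
    and sub: "subordinate (\<lambda>z. p z * Q z + z * deriv p z / (of_real \<beta> * p z + of_real \<alpha>))
                          (\<lambda>z. (1 + of_real D * z) / (1 + of_real E * z))"
  shows "subordinate p (\<lambda>z. (1 + of_real A * z) / (1 + of_real B * z))"
proof -
  define \<phi> where "\<phi> = (\<lambda>z. cmod (of_real A - of_real B * p z) - cmod (p z - 1))"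
  define w where "w = (\<lambda>z. (p z - 1) / (of_real A - of_real B * p z))"
  have pcont: "continuous_on (ball 0 1) p" using p_hol holomorphic_on_imp_continuous_on by blast
  have \<phi>cont: "continuous_on (ball 0 1) \<phi>" unfolding \<phi>_def using pcont by (intro continuous_intros)
  have AB0: "of_real A - of_real B \<noteq> (0::complex)" using AB by simp
  have \<phi>0: "\<phi> 0 > 0" using AB by (simp add: \<phi>_def p0 del: of_real_diff)
  show ?thesis
  proof (cases "\<forall>z\<in>ball 0 1. \<phi> z > 0")
    case True
    have nz: "of_real A - of_real B * p z \<noteq> 0" if "z \<in> ball 0 1" for z
    proof
      assume h: "of_real A - of_real B * p z = 0"
      have "\<phi> z > 0" using True that by blast
      then show False using h by (simp add: \<phi>_def)
    qed
    show ?thesis unfolding subordinate_def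
    proof (intro exI conjI ballI)
      show "w holomorphic_on ball 0 1" unfolding w_def using p_hol nz by (intro holomorphic_intros) auto
      show "w ` ball 0 1 \<subseteq> ball 0 1"
      proof
        fix y assume "y \<in> w ` ball 0 1"
        then obtain z where z: "z \<in> ball 0 1" "y = w z" by auto
        have "cmod (p z - 1) < cmod (of_real A - of_real B * p z)" using True z by (auto simp: \<phi>_def)
        then have "norm (w z) < 1" using nz[OF z(1)] by (simp add: w_def norm_divide divide_simps)
        then show "y \<in> ball 0 1" using z(2) by simp
      qed
      show "w 0 = 0" by (simp add: w_def p0)
      fix z :: complex assume z: "z \<in> ball 0 1"
      have c: "of_real A - of_real B * p z \<noteq> 0" by (rule nz[OF z])
      show "p z = (1 + of_real A * w z) / (1 + of_real B * w z)"
      proof -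
        have e1: "1 + of_real A * w z = p z * (of_real A - of_real B) / (of_real A - of_real B * p z)"
          using c by (simp add: w_def field_simps)
        have e2: "1 + of_real B * w z = (of_real A - of_real B) / (of_real A - of_real B * p z)"
          using c by (simp add: w_def field_simps)
        have gen: "\<And>q a d :: complex. a \<noteq> 0 \<Longrightarrow> d \<noteq> 0 \<Longrightarrow> q = (q * a / d) / (a / d)" by simp
        show ?thesis unfolding e1 e2 by (rule gen[OF AB0 c])
      qed
    qed
  next
    case False
    then obtain z1 where z1: "z1 \<in> ball 0 1" "\<phi> z1 \<le> 0" by force
    define \<rho> where "\<rho> = cmod z1"
    have \<rho>: "\<rho> < 1" using z1 by (simp add: \<rho>_def)
    define K where "K = cball 0 \<rho> \<inter> \<phi> -` {..0}"
    have cb: "cball 0 \<rho> \<subseteq> ball 0 1" using \<rho> by auto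
    have "closed K" unfolding K_def
      by (rule continuous_closed_preimage) (auto intro: continuous_on_subset[OF \<phi>cont cb])
    then have "compact K" by (simp add: compact_eq_bounded_closed K_def bounded_Int)
    moreover have "K \<noteq> {}" using z1 by (auto simp: K_def \<rho>_def)
    moreover have "continuous_on K norm" by (intro continuous_intros)
    ultimately obtain z0 where z0: "z0 \<in> K" "\<forall>y\<in>K. norm z0 \<le> norm y"
      using continuous_attains_inf by blast
    define r where "r = norm z0"
    have z0b: "z0 \<in> ball 0 1" "\<phi> z0 \<le> 0" "r \<le> \<rho>" using z0 cb \<rho> by (auto simp: K_def r_def)
    have pos: "\<phi> z > 0" if "z \<in> ball 0 r" for z
    proof (rule ccontr)
      assume "\<not> \<phi> z > 0"
      then have "z \<in> K" using that z0b by (auto simp: K_def)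
      then show False using z0 that by (auto simp: r_def)
    qed
    have r0: "r > 0" using \<phi>0 z0b(2) by (auto simp: r_def)
    have cbr: "cball 0 r \<subseteq> ball 0 1" using z0b \<rho> by auto
    have "\<phi> z0 \<ge> 0"
    proof (rule continuous_ge_on_closure[where S="ball 0 r" and f=\<phi> and x=z0 and a=0])
      show "continuous_on (closure (ball 0 r)) \<phi>" using r0 continuous_on_subset[OF \<phi>cont cbr] by simp
      show "z0 \<in> closure (ball 0 r)" using r0 by (simp add: r_def)
      show "\<And>x. x \<in> ball 0 r \<Longrightarrow> 0 \<le> \<phi> x" using pos by (simp add: less_imp_le)
    qed
    then have eq: "cmod (p z0 - 1) = cmod (of_real A - of_real B * p z0)" using z0b by (simp add: \<phi>_def)
    define c where "c = of_real A - of_real B * p z0"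
    have c0: "c \<noteq> 0"
    proof
      assume "c = 0"
      then have "p z0 = 1" using eq by (simp add: c_def)
      then show False using \<open>c = 0\<close> AB0 by (simp add: c_def)
    qed
    have nzr: "of_real A - of_real B * p z \<noteq> 0" if "z \<in> ball 0 r" for z
      using pos[OF that] by (auto simp: \<phi>_def)
    have phr: "p holomorphic_on ball 0 r"
      using holomorphic_on_subset[OF p_hol] cbr ball_subset_cball by blast
    have whol: "w holomorphic_on ball 0 r" unfolding w_def
      using phr nzr by (intro holomorphic_intros) auto
    have wlt: "\<forall>z\<in>ball 0 r. norm (w z) < 1"
    proof
      fix z :: complex assume z: "z \<in> ball 0 r"
      have "cmod (p z - 1) < cmod (of_real A - of_real B * p z)" using pos[OF z] by (auto simp: \<phi>_def)
      then show "norm (w z) < 1" using nzr[OF z] by (simp add: w_def norm_divide divide_simps)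
    qed
    have wz0: "norm (w z0) = 1" using eq c0 by (simp add: w_def norm_divide c_def)
    have dp: "(p has_field_derivative deriv p z0) (at z0)"
      using holomorphic_derivI[OF p_hol open_ball z0b(1)] .
    have d1: "((\<lambda>z. p z - 1) has_field_derivative deriv p z0) (at z0)"
      using dp by (auto intro!: derivative_eq_intros)
    have d2: "((\<lambda>z. of_real A - of_real B * p z) has_field_derivative (- (of_real B * deriv p z0))) (at z0)"
      using dp by (auto intro!: derivative_eq_intros)
    define w' where "w' = (deriv p z0 * c - (p z0 - 1) * (- (of_real B * deriv p z0))) / (c * c)"
    have dw: "(w has_field_derivative w') (at z0)"
      using DERIV_divide[OF d1 d2] c0 unfolding w_def w'_def c_def by simp
    have "norm (z0 * w') \<ge> 1"
      using jack[OF r0 whol _ wlt _ wz0 dw] p0 by (simp add: w_def r_def)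
    moreover have "w' = deriv p z0 * of_real (A - B) / c^2"
      unfolding w'_def c_def by (simp add: power2_eq_square algebra_simps)
    ultimately have dd: "norm (z0 * (deriv p z0 * of_real (A - B) / c^2)) \<ge> 1" by simp
    have big: "norm (p z0 * Q z0 + z0 * deriv p z0 / (of_real \<beta> * p z0 + of_real \<alpha>)) > (1 + D) / (1 + E)"
      using mainbound[OF AB ED ab M ineq c_def c0 refl _ dd, of "Q z0"] wz0 c0 QM z0b(1) denom
      by (simp add: w_def c_def)
    from sub obtain \<omega> where om: "\<omega> ` ball 0 1 \<subseteq> ball 0 1"
      "\<forall>z\<in>ball 0 1. p z * Q z + z * deriv p z / (of_real \<beta> * p z + of_real \<alpha>) =
          (1 + of_real D * \<omega> z) / (1 + of_real E * \<omega> z)"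
      unfolding subordinate_def by blast
    have "\<omega> z0 \<in> ball 0 1" using om(1) z0b(1) by blast
    then have "norm (\<omega> z0) < 1" by simp
    then have "norm ((1 + of_real D * \<omega> z0) / (1 + of_real E * \<omega> z0)) \<le> (1 + D) / (1 + E)"
      using boundF ED by blast
    then show ?thesis using big om(2) z0b(1) by simp
  qed
qed

end
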